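(* Let $k$ be a field, $S=k[x_1,x_2,x_3,x_4]$, and let $M\subseteq S$ be a monomial ideal minimally generated by monomials $m_1,\dots,m_q$ with $q\ge 2$. Suppose there is an index $1\le k\le q$ such that $m_k\mid\operatorname{lcm}(m_i,m_j)$ for all $i\ne j$. Then $\operatorname{pd}(S/M)=2$.
   Context: $\operatorname{pd}(S/M)$ denotes the projective dimension of $S/M$ as an $S$-module. *)

theory Defs
  imports Main "HOL-Library.Poly_Mapping" "HOL-Library.Numeral_Type"
begin

text \<open>The polynomial ring S = k[x_1,x_2,x_3,x_4]: finitely supported functions from
  exponent vectors (indexed by the 4-element type) to coefficients in k.\<close>
type_synonym 'k poly4 = "(4 \<Rightarrow>\<^sub>0 nat) \<Rightarrow>\<^sub>0 'k"

definition monom4 :: "(4 \<Rightarrow>\<^sub>0 nat) \<Rightarrow> 'k::field poly4" where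
  "monom4 a = Poly_Mapping.single a 1"

definition exp_lcm :: "(4 \<Rightarrow>\<^sub>0 nat) \<Rightarrow> (4 \<Rightarrow>\<^sub>0 nat) \<Rightarrow> (4 \<Rightarrow>\<^sub>0 nat)" where
  "exp_lcm a b = Abs_poly_mapping (\<lambda>v. max (Poly_Mapping.lookup a v) (Poly_Mapping.lookup b v))"

definition ideal_gen :: "'k::field poly4 set \<Rightarrow> 'k poly4 set" where
  "ideal_gen G = {x. \<exists>F c. finite F \<and> F \<subseteq> G \<and> x = (\<Sum>g\<in>F. c g * g)}"

text \<open>Free S-module with basis indexed by nat (elements: finitely supported vectors).\<close>
type_synonym 'k freeS = "nat \<Rightarrow>\<^sub>0 'k poly4"

definition smultF :: "'k::field poly4 \<Rightarrow> 'k freeS \<Rightarrow> 'k freeS" where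
  "smultF s v = Poly_Mapping.map (\<lambda>x. s * x) v"

definition S_linear :: "('k::field freeS \<Rightarrow> 'k freeS) \<Rightarrow> bool" where
  "S_linear f \<longleftrightarrow> (\<forall>u v. f (u + v) = f u + f v) \<and> (\<forall>s v. f (smultF s v) = smultF s (f v))"

definition S_linear_to_S :: "('k::field freeS \<Rightarrow> 'k poly4) \<Rightarrow> bool" where
  "S_linear_to_S f \<longleftrightarrow> (\<forall>u v. f (u + v) = f u + f v) \<and> (\<forall>s v. f (smultF s v) = s * f v)"

text \<open>Projective module: a direct summand of a free module, i.e. the image of an
  S-linear idempotent endomorphism of the free module.\<close>
definition projective_sub :: "'k::field freeS set \<Rightarrow> bool" where
  "projective_sub P \<longleftrightarrow> (\<exists>e. S_linear e \<and> (\<forall>v. e (e v) = e v) \<and> P = range e)"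

text \<open>A projective resolution of length (at most) n of S/M:
  0 \<rightarrow> P_n \<rightarrow> ... \<rightarrow> P_1 \<rightarrow> P_0 \<rightarrow> S/M \<rightarrow> 0, with augmentation induced by eps.\<close>
definition proj_resolution ::
  "'k::field poly4 set \<Rightarrow> nat \<Rightarrow> (nat \<Rightarrow> 'k freeS set) \<Rightarrow> (nat \<Rightarrow> 'k freeS \<Rightarrow> 'k freeS)
     \<Rightarrow> ('k freeS \<Rightarrow> 'k poly4) \<Rightarrow> bool" where
  "proj_resolution M n P d eps \<longleftrightarrow>
     (\<forall>i. projective_sub (P i)) \<and> (\<forall>i>n. P i = {0}) \<and>
     (\<forall>i\<ge>1. S_linear (d i) \<and> d i ` P i \<subseteq> P (i - 1)) \<and>
     S_linear_to_S eps \<and>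
     (\<forall>s. \<exists>p\<in>P 0. s - eps p \<in> M) \<and>
     {p \<in> P 0. eps p \<in> M} = d 1 ` P 1 \<and>
     (\<forall>i\<ge>1. {p \<in> P i. d i p = 0} = d (Suc i) ` P (Suc i))"

definition pd_quot :: "'k::field poly4 set \<Rightarrow> nat" where
  "pd_quot M = (LEAST n. \<exists>P d eps. proj_resolution M n P d eps)"

end

theory Submission imports Defs begin
abbreviation lk where "lk \<equiv> Poly_Mapping.lookup"

lemma lookup_single_mult_add:
  fixes f :: "('a \<Rightarrow>\<^sub>0 nat) \<Rightarrow>\<^sub>0 'k::comm_ring_1"
  shows "lk (Poly_Mapping.single a c * f) (a + b) = c * lk f b"
proof -
  have "lk (Poly_Mapping.single a c * f) (a + b) = (\<Sum>l. lk (Poly_Mapping.single a c) l * (\<Sum>q. lk f q when a + b = l + q))"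
    by (rule lookup_mult)
  also have "\<dots> = (\<Sum>l. (c * (\<Sum>q. lk f q when a + b = l + q)) when l = a)"
    by (rule Sum_any.cong) (auto simp: lookup_single when_def)
  also have "\<dots> = c * (\<Sum>q. lk f q when a + b = a + q)"
    by simp
  also have "(\<Sum>q. lk f q when a + b = a + q) = (\<Sum>q. lk f q when q = b)"
    by (rule Sum_any.cong) (auto simp: when_def)
  also have "\<dots> = lk f b" by simp
  finally show ?thesis .
qed

lemma lookup_single_mult_not:
  fixes f :: "('a \<Rightarrow>\<^sub>0 nat) \<Rightarrow>\<^sub>0 'k::comm_ring_1"
  assumes "\<And>b. k \<noteq> a + b"
  shows "lk (Poly_Mapping.single a c * f) k = 0"
proof -
  have "lk (Poly_Mapping.single a c * f) k = (\<Sum>l. lk (Poly_Mapping.single a c) l * (\<Sum>q. lk f q when k = l + q))"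
    by (rule lookup_mult)
  also have "\<dots> = (\<Sum>l. (c * (\<Sum>q. lk f q when k = l + q)) when l = a)"
    by (rule Sum_any.cong) (auto simp: lookup_single when_def)
  also have "\<dots> = c * (\<Sum>q. lk f q when k = a + q)"
    by simp
  also have "(\<Sum>q. lk f q when k = a + q) = 0"
    using assms by (simp add: when_def)
  finally show ?thesis by simp
qed

definition le4 :: "(4 \<Rightarrow>\<^sub>0 nat) \<Rightarrow> (4 \<Rightarrow>\<^sub>0 nat) \<Rightarrow> bool" where
  "le4 a b \<longleftrightarrow> (\<forall>v. lk a v \<le> lk b v)"
definition sb :: "(4 \<Rightarrow>\<^sub>0 nat) \<Rightarrow> (4 \<Rightarrow>\<^sub>0 nat) \<Rightarrow> (4 \<Rightarrow>\<^sub>0 nat)" where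
  "sb a b = Abs_poly_mapping (\<lambda>v. lk a v - lk b v)"
definition mn :: "(4 \<Rightarrow>\<^sub>0 nat) \<Rightarrow> (4 \<Rightarrow>\<^sub>0 nat) \<Rightarrow> (4 \<Rightarrow>\<^sub>0 nat)" where
  "mn a b = Abs_poly_mapping (\<lambda>v. min (lk a v) (lk b v))"

lemma lk_Abs4: "lk (Abs_poly_mapping (f :: 4 \<Rightarrow> nat)) = f"
  by (rule lookup_Abs_poly_mapping) simp

lemma lk_sb [simp]: "lk (sb a b) v = lk a v - lk b v"
  by (simp add: sb_def lk_Abs4)
lemma lk_mn [simp]: "lk (mn a b) v = min (lk a v) (lk b v)"
  by (simp add: mn_def lk_Abs4)
lemma lk_lcm [simp]: "lk (exp_lcm a b) v = max (lk a v) (lk b v)"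
  by (simp add: exp_lcm_def lk_Abs4)

lemma exp_eqI: "(\<And>v. lk (a::4 \<Rightarrow>\<^sub>0 nat) v = lk b v) \<Longrightarrow> a = b"
  by (rule poly_mapping_eqI)

lemma le4_add: "le4 a b \<Longrightarrow> b = a + sb b a"
  by (rule exp_eqI) (auto simp: le4_def lookup_add)

lemma le4_addI: "le4 a (a + c)"
  by (auto simp: le4_def lookup_add)

lemma lk_monom_mult:
  fixes f :: "'k::field poly4"
  shows "lk (monom4 a * f) e = (if le4 a e then lk f (sb e a) else 0)"
proof (cases "le4 a e")
  case True
  then have "e = a + sb e a" by (rule le4_add)
  then have "lk (monom4 a * f) e = lk (monom4 a * f) (a + sb e a)" by simp
  also have "\<dots> = lk f (sb e a)" unfolding monom4_def by (simp add: lookup_single_mult_add)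
  finally show ?thesis using True by simp
next
  case False
  then have "\<And>b. e \<noteq> a + b" using le4_addI by blast
  then show ?thesis using False unfolding monom4_def by (simp add: lookup_single_mult_not)
qed

lemma lk_monom_mult_add:
  fixes f :: "'k::field poly4"
  shows "lk (monom4 a * f) (a + b) = lk f b"
  unfolding monom4_def by (simp add: lookup_single_mult_add)

lemma monom_mult: "(monom4 a :: 'k::field poly4) * monom4 b = monom4 (a + b)"
  unfolding monom4_def by (simp add: mult_single)

lemma monom_cancel:
  fixes f g :: "'k::field poly4"
  assumes "monom4 a * f = monom4 a * g" shows "f = g"
proof (rule poly_mapping_eqI)
  fix b
  have "lk f b = lk (monom4 a * f) (a + b)" by (simp add: lk_monom_mult_add)
  also have "\<dots> = lk (monom4 a * g) (a + b)" by (simp only: assms)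
  also have "\<dots> = lk g b" by (simp add: lk_monom_mult_add)
  finally show "lk f b = lk g b" .
qed

lemma monom_nz: "(monom4 a :: 'k::field poly4) \<noteq> 0"
  unfolding monom4_def by (metis lookup_single_eq lookup_zero one_neq_zero)

lemma monom_mult_eq0:
  fixes f :: "'k::field poly4"
  assumes "monom4 a * f = 0" shows "f = 0"
  using monom_cancel[of a f 0] assms by simp

definition shiftp :: "(4 \<Rightarrow>\<^sub>0 nat) \<Rightarrow> 'k::field poly4 \<Rightarrow> 'k poly4" where
  "shiftp u f = Abs_poly_mapping (\<lambda>b. lk f (u + b))"

lemma lk_shiftp: "lk (shiftp u f) b = lk f (u + b)"
proof -
  have "finite {b. lk f (u + b) \<noteq> 0}"
  proof -
    have "{b. lk f (u + b) \<noteq> 0} = (\<lambda>b. u + b) -` {x. lk f x \<noteq> 0}" by auto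
    moreover have "finite ((\<lambda>b. u + b) -` {x. lk f x \<noteq> 0})"
      by (rule finite_vimageI) (auto simp: inj_on_def)
    ultimately show ?thesis by simp
  qed
  then show ?thesis unfolding shiftp_def by simp
qed

lemma shiftp_0 [simp]: "shiftp u 0 = 0"
  by (rule poly_mapping_eqI) (simp add: lk_shiftp)

lemma monom_shiftp:
  fixes f :: "'k::field poly4"
  assumes "\<And>b. lk f b \<noteq> 0 \<Longrightarrow> le4 u b"
  shows "monom4 u * shiftp u f = f"
proof (rule poly_mapping_eqI)
  fix e
  show "lk (monom4 u * shiftp u f) e = lk f e"
  proof (cases "le4 u e")
    case True
    then show ?thesis by (simp add: lk_monom_mult lk_shiftp le4_add[symmetric])
  next
    case False
    then show ?thesis using assms by (auto simp: lk_monom_mult)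
  qed
qed

lemma monom_dvd_le4:
  assumes "(monom4 a :: 'k::field poly4) dvd monom4 b" shows "le4 a b"
proof -
  obtain c :: "'k poly4" where c: "monom4 b = monom4 a * c" using assms by (auto elim: dvdE)
  have "lk (monom4 b :: 'k poly4) b = 1" unfolding monom4_def by simp
  then have "lk (monom4 a * c) b \<noteq> 0" using c by simp
  then show ?thesis by (auto simp: lk_monom_mult split: if_splits)
qed

lemma le4_monom:
  assumes "le4 a b" shows "(monom4 b :: 'k::field poly4) = monom4 a * monom4 (sb b a)"
  using le4_add[OF assms] by (simp add: monom_mult)


lemma ideal_0: "0 \<in> ideal_gen G"
  unfolding ideal_gen_def by (rule CollectI, rule exI[of _ "{}"]) simp

lemma ideal_gen_in: "g \<in> G \<Longrightarrow> g \<in> ideal_gen G"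
  unfolding ideal_gen_def by (rule CollectI, rule exI[of _ "{g}"], rule exI[of _ "\<lambda>_. 1"]) simp

lemma ideal_add:
  assumes "x \<in> ideal_gen G" "y \<in> ideal_gen G" shows "x + y \<in> ideal_gen G"
proof -
  obtain F1 c1 where 1: "finite F1" "F1 \<subseteq> G" "x = (\<Sum>g\<in>F1. c1 g * g)"
    using assms(1) unfolding ideal_gen_def by auto
  obtain F2 c2 where 2: "finite F2" "F2 \<subseteq> G" "y = (\<Sum>g\<in>F2. c2 g * g)"
    using assms(2) unfolding ideal_gen_def by auto
  define c where "c g = (if g \<in> F1 then c1 g else 0) + (if g \<in> F2 then c2 g else 0)" for g
  have fin: "finite (F1 \<union> F2)" using 1 2 by simp
  have "(\<Sum>g\<in>F1 \<union> F2. c g * g) = (\<Sum>g\<in>F1 \<union> F2. (if g \<in> F1 then c1 g * g else 0))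
       + (\<Sum>g\<in>F1 \<union> F2. (if g \<in> F2 then c2 g * g else 0))"
  proof -
    have "(\<Sum>g\<in>F1 \<union> F2. c g * g) = (\<Sum>g\<in>F1 \<union> F2. (if g \<in> F1 then c1 g * g else 0) + (if g \<in> F2 then c2 g * g else 0))"
      by (rule sum.cong) (auto simp: c_def distrib_right)
    then show ?thesis by (simp add: sum.distrib)
  qed
  also have "(\<Sum>g\<in>F1 \<union> F2. (if g \<in> F1 then c1 g * g else 0)) = (\<Sum>g\<in>(F1 \<union> F2) \<inter> F1. c1 g * g)"
    by (rule sum.inter_restrict[OF fin, symmetric])
  also have "(F1 \<union> F2) \<inter> F1 = F1" by auto
  also have "(\<Sum>g\<in>F1 \<union> F2. (if g \<in> F2 then c2 g * g else 0)) = (\<Sum>g\<in>(F1 \<union> F2) \<inter> F2. c2 g * g)"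
    by (rule sum.inter_restrict[OF fin, symmetric])
  also have "(F1 \<union> F2) \<inter> F2 = F2" by auto
  finally have eq: "x + y = (\<Sum>g\<in>F1 \<union> F2. c g * g)" using 1 2 by simp
  have sub: "F1 \<union> F2 \<subseteq> G" using 1(2) 2(2) by (rule Un_least)
  have conj: "finite (F1 \<union> F2) \<and> F1 \<union> F2 \<subseteq> G \<and> x + y = (\<Sum>g\<in>F1 \<union> F2. c g * g)"
    using fin sub eq by (intro conjI)
  show ?thesis unfolding ideal_gen_def by (intro CollectI exI[of _ "F1 \<union> F2"] exI[of _ c] conj)
qed

lemma ideal_mult:
  assumes "x \<in> ideal_gen G" shows "r * x \<in> ideal_gen G"
proof -
  obtain F c where 1: "finite F" "F \<subseteq> G" "x = (\<Sum>g\<in>F. c g * g)"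
    using assms unfolding ideal_gen_def by auto
  have "r * x = (\<Sum>g\<in>F. (r * c g) * g)" using 1 by (simp add: sum_distrib_left mult.assoc)
  then have conj: "finite F \<and> F \<subseteq> G \<and> r * x = (\<Sum>g\<in>F. (r * c g) * g)"
    using 1(1,2) by (intro conjI)
  show ?thesis unfolding ideal_gen_def by (intro CollectI exI[of _ F] exI[of _ "\<lambda>g. r * c g"] conj)
qed

lemma ideal_diff:
  assumes "x \<in> ideal_gen G" "y \<in> ideal_gen G" shows "x - y \<in> ideal_gen G"
proof -
  have "(-1) * y \<in> ideal_gen G" by (rule ideal_mult[OF assms(2)])
  then have "x + (-1) * y \<in> ideal_gen G" by (rule ideal_add[OF assms(1)])
  then show ?thesis by simp
qed

lemma ideal_sum:
  assumes "finite S" "\<And>i. i \<in> S \<Longrightarrow> f i \<in> ideal_gen G"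
  shows "sum f S \<in> ideal_gen G"
  using assms by (induction S rule: finite_induct) (auto intro: ideal_0 ideal_add)

lemma ideal_monom:
  fixes a :: "nat \<Rightarrow> (4 \<Rightarrow>\<^sub>0 nat)"
  assumes "(monom4 c :: 'k::field poly4) \<in> ideal_gen ((\<lambda>i. monom4 (a i)) ` S)"
  shows "\<exists>i\<in>S. le4 (a i) c"
proof -
  obtain F cf where 1: "finite F" "F \<subseteq> (\<lambda>i. monom4 (a i)) ` S" "(monom4 c :: 'k poly4) = (\<Sum>g\<in>F. cf g * g)"
    using assms unfolding ideal_gen_def by blast
  have "lk (monom4 c :: 'k poly4) c = 1" unfolding monom4_def by simp
  then have "(\<Sum>g\<in>F. lk (cf g * g) c) \<noteq> 0" using 1(3) by (simp add: lookup_sum)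
  then obtain g where g: "g \<in> F" "lk (cf g * g) c \<noteq> 0" by (meson sum.neutral)
  obtain i where i: "i \<in> S" "g = monom4 (a i)" using g(1) 1(2) by auto
  have "lk (monom4 (a i) * cf g) c \<noteq> 0" using g(2) i(2) by (simp add: mult.commute)
  then have "le4 (a i) c" by (auto simp: lk_monom_mult split: if_splits)
  then show ?thesis using i by blast
qed

lemma monom_in_ideal:
  fixes a :: "nat \<Rightarrow> (4 \<Rightarrow>\<^sub>0 nat)"
  assumes "i \<in> S" "le4 (a i) c"
  shows "(monom4 c :: 'k::field poly4) \<in> ideal_gen ((\<lambda>i. monom4 (a i)) ` S)"
proof -
  have "(monom4 (a i) :: 'k poly4) \<in> ideal_gen ((\<lambda>i. monom4 (a i)) ` S)"
    using assms(1) by (intro ideal_gen_in) auto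
  then have "monom4 (sb c (a i)) * (monom4 (a i) :: 'k poly4) \<in> ideal_gen ((\<lambda>i. monom4 (a i)) ` S)"
    by (rule ideal_mult)
  moreover have eq: "(monom4 c :: 'k poly4) = monom4 (sb c (a i)) * monom4 (a i)"
    using le4_monom[OF assms(2)] by (simp add: mult.commute)
  ultimately show ?thesis by (simp only: eq)
qed

lemma lk_smultF [simp]: "lk (smultF s v) n = s * lk v n"
  unfolding smultF_def by (simp add: Poly_Mapping.map.rep_eq when_def)

lemma smultF_smultF: "smultF s (smultF t v) = smultF (s * t) v"
  by (rule poly_mapping_eqI) (simp only: lk_smultF mult.assoc)

lemma lk_Absv:
  fixes f :: "nat \<Rightarrow> 'b::zero"
  assumes "\<And>n. n > N \<Longrightarrow> f n = 0"
  shows "lk (Abs_poly_mapping f) = f"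
proof (rule lookup_Abs_poly_mapping)
  have "{x. f x \<noteq> 0} \<subseteq> {..N}"
  proof
    fix x assume "x \<in> {x. f x \<noteq> 0}"
    then have "\<not> N < x" using assms by auto
    then show "x \<in> {..N}" by simp
  qed
  then show "finite {x. f x \<noteq> 0}" by (rule finite_subset) simp
qed

lemma lk_Absk:
  fixes v :: "'b \<Rightarrow>\<^sub>0 'c::zero"
  assumes "\<And>n. lk v n = 0 \<Longrightarrow> f n = 0"
  shows "lk (Abs_poly_mapping f) = f"
proof (rule lookup_Abs_poly_mapping)
  have "{x. f x \<noteq> 0} \<subseteq> {x. lk v x \<noteq> 0}" using assms by auto
  then show "finite {x. f x \<noteq> 0}" by (rule finite_subset) simp
qed

lemma S_linear_0: "S_linear f \<Longrightarrow> f 0 = 0"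
  proof -
  assume "S_linear f"
  then have "f (0 + 0) = f 0 + f 0" unfolding S_linear_def by blast
  then have "f 0 + 0 = f 0 + f 0" by simp
  then show "f 0 = 0" by (metis add_left_cancel)
qed

lemma S_linear_diff: "S_linear f \<Longrightarrow> f (u - v) = f u - f v"
  proof -
  assume "S_linear f"
  then have "f ((u - v) + v) = f (u - v) + f v" unfolding S_linear_def by blast
  then show "f (u - v) = f u - f v" by (simp add: eq_diff_eq)
qed

lemma S_linear_smult: "S_linear f \<Longrightarrow> f (smultF s v) = smultF s (f v)"
  unfolding S_linear_def by blast

lemma proj_0: assumes "projective_sub P" shows "0 \<in> P"
proof -
  obtain e where e: "S_linear e" "P = range e" using assms unfolding projective_sub_def by blast
  have "e 0 = 0" by (rule S_linear_0[OF e(1)])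
  then have "0 \<in> range e" by (metis rangeI)
  then show ?thesis using e(2) by simp
qed

lemma proj_diff: assumes "projective_sub P" "x \<in> P" "y \<in> P" shows "x - y \<in> P"
proof -
  obtain e where e: "S_linear e" "P = range e" using assms unfolding projective_sub_def by blast
  obtain x' y' where "x = e x'" "y = e y'" using assms(2,3) e(2) by blast
  then have "x - y = e (x' - y')" using S_linear_diff[OF e(1)] by simp
  then show ?thesis using e(2) by simp
qed

lemma proj_smult: assumes "projective_sub P" "x \<in> P" shows "smultF s x \<in> P"
proof -
  obtain e where e: "S_linear e" "P = range e" using assms unfolding projective_sub_def by blast
  obtain x' where "x = e x'" using assms(2) e(2) by blast
  then have "smultF s x = e (smultF s x')" using S_linear_smult[OF e(1)] by simp
  then show ?thesis using e(2) by simp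
qed


lemma smultF_cancel:
  assumes "smultF (monom4 u) x = smultF (monom4 u :: 'k::field poly4) y" shows "x = y"
proof (rule poly_mapping_eqI)
  fix n
  have "lk (smultF (monom4 u) x) n = lk (smultF (monom4 u) y) n" using assms by simp
  then have "monom4 u * lk x n = monom4 u * lk y n" by (simp only: lk_smultF)
  then show "lk x n = lk y n" by (rule monom_cancel)
qed

lemma disj_divide:
  fixes f h :: "'k::field poly4"
  assumes eq: "monom4 u1 * f = monom4 u2 * h" and disj: "\<And>v. lk u1 v = 0 \<or> lk u2 v = 0"
    and nz: "lk f b \<noteq> 0"
  shows "le4 u2 b"
proof -
  have "lk (monom4 u1 * f) (u1 + b) \<noteq> 0" using nz by (simp add: lk_monom_mult_add)
  then have "lk (monom4 u2 * h) (u1 + b) \<noteq> 0" using eq by simp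
  then have "le4 u2 (u1 + b)" by (auto simp: lk_monom_mult split: if_splits)
  then have le: "lk u2 v \<le> lk u1 v + lk b v" for v by (simp add: le4_def lookup_add)
  show ?thesis unfolding le4_def
  proof
    fix v
    show "lk u2 v \<le> lk b v" using le[of v] disj[of v] by auto
  qed
qed

lemma min_gens:
  fixes a :: "nat \<Rightarrow> (4 \<Rightarrow>\<^sub>0 nat)"
  assumes "\<forall>j\<in>{1..q}. (monom4 (a j) :: 'f::field poly4) \<notin> ideal_gen ((\<lambda>i. monom4 (a i)) ` ({1..q} - {j}))"
    and "i \<in> {1..q}" "j \<in> {1..q}" "i \<noteq> j"
  shows "\<not> le4 (a i) (a j)"
proof
  assume "le4 (a i) (a j)"
  then have "(monom4 (a j) :: 'f poly4) \<in> ideal_gen ((\<lambda>i. monom4 (a i)) ` ({1..q} - {j}))"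
    using assms(2,4) by (intro monom_in_ideal) auto
  moreover have "(monom4 (a j) :: 'f poly4) \<notin> ideal_gen ((\<lambda>i. monom4 (a i)) ` ({1..q} - {j}))"
    using bspec[OF assms(1) assms(3)] .
  ultimately show False by (rule notE[rotated])
qed

lemma lower_bound:
  fixes a :: "nat \<Rightarrow> (4 \<Rightarrow>\<^sub>0 nat)" and q :: nat and M :: "'f::field poly4 set"
  assumes q2: "q \<ge> 2"
    and Mdef: "M = ideal_gen ((\<lambda>i. monom4 (a i)) ` {1..q})"
    and minimal: "\<forall>j\<in>{1..q}. (monom4 (a j) :: 'f poly4) \<notin> ideal_gen ((\<lambda>i. monom4 (a i)) ` ({1..q} - {j}))"
    and res: "proj_resolution M n P d eps"
  shows "2 \<le> n"
proof (rule ccontr)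
  assume "\<not> 2 \<le> n"
  then have P2: "P 2 = {0}" using res unfolding proj_resolution_def by auto
  have Pproj: "\<And>i. projective_sub (P i)" using res unfolding proj_resolution_def by auto
  have d1: "S_linear (d 1)" and d2: "S_linear (d 2)" using res unfolding proj_resolution_def by auto
  have epsl: "S_linear_to_S eps" using res unfolding proj_resolution_def by auto
  have surj: "\<forall>s. \<exists>p\<in>P 0. s - eps p \<in> M" using res unfolding proj_resolution_def by auto
  have ex0: "{p \<in> P 0. eps p \<in> M} = d 1 ` P 1" using res unfolding proj_resolution_def by auto
  have ex1': "\<forall>i\<ge>1. {p \<in> P i. d i p = 0} = d (Suc i) ` P (Suc i)"
    using res unfolding proj_resolution_def by blast
  have ex1: "{p \<in> P 1. d 1 p = 0} = d 2 ` P 2"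
    using ex1'[rule_format, of 1] by (simp add: numeral_2_eq_2)
  obtain p where p: "p \<in> P 0" "1 - eps p \<in> M" using surj by blast
  define X where "X = 1 - eps p"
  have epsp: "eps p = 1 - X" unfolding X_def by simp
  have epss: "eps (smultF s p) = s * eps p" for s using epsl unfolding S_linear_to_S_def by blast
  have XM: "X \<in> M" using p X_def by simp
  have inM: "s \<in> M \<longleftrightarrow> smultF s p \<in> d 1 ` P 1" for s
  proof
    assume "s \<in> M"
    then have "s - s * X \<in> M" using XM Mdef by (simp add: ideal_diff ideal_mult)
    then have "eps (smultF s p) \<in> M" by (simp add: epss epsp algebra_simps)
    moreover have "smultF s p \<in> P 0" using p(1) Pproj by (simp add: proj_smult)
    ultimately show "smultF s p \<in> d 1 ` P 1" using ex0 by blast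
  next
    assume "smultF s p \<in> d 1 ` P 1"
    then have "eps (smultF s p) \<in> M" using ex0 by blast
    then have A: "s * eps p \<in> M" using epss by simp
    have B: "s * X \<in> M" using XM unfolding Mdef by (rule ideal_mult)
    have "s * eps p + s * X \<in> M" using A B unfolding Mdef by (rule ideal_add)
    then show "s \<in> M" by (simp add: epss epsp algebra_simps)
  qed
  have gen: "(monom4 (a i) :: 'f poly4) \<in> M" if "i \<in> {1..q}" for i
    using that Mdef by (simp add: ideal_gen_in)
  have i1: "1 \<in> {1..q}" and i2: "2 \<in> {1..q}" using q2 by auto
  obtain y1 where y1: "y1 \<in> P 1" "d 1 y1 = smultF (monom4 (a 1)) p" using inM[THEN iffD1, OF gen[OF i1]] by (rule imageE) simp
  obtain y2 where y2: "y2 \<in> P 1" "d 1 y2 = smultF (monom4 (a 2)) p" using inM[THEN iffD1, OF gen[OF i2]] by (rule imageE) simp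
  define Lx where "Lx = exp_lcm (a 1) (a 2)"
  define u1 where "u1 = sb Lx (a 1)"
  define u2 where "u2 = sb Lx (a 2)"
  define g where "g = mn (a 1) (a 2)"
  have e1: "u1 + a 1 = Lx" unfolding u1_def Lx_def by (rule exp_eqI) (simp add: lookup_add)
  have e2: "u2 + a 2 = Lx" unfolding u2_def Lx_def by (rule exp_eqI) (simp add: lookup_add)
  have e3: "u2 + g = a 1" unfolding u2_def Lx_def g_def by (rule exp_eqI) (simp add: lookup_add max_def min_def)
  have disj: "lk u1 v = 0 \<or> lk u2 v = 0" for v unfolding u1_def u2_def Lx_def by (simp add: max_def)
  have m1: "(monom4 u1 :: 'f poly4) * monom4 (a 1) = monom4 Lx" using e1 by (simp add: monom_mult)
  have m2: "(monom4 u2 :: 'f poly4) * monom4 (a 2) = monom4 Lx" using e2 by (simp add: monom_mult)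
  have m3: "(monom4 u2 :: 'f poly4) * monom4 g = monom4 (a 1)" using e3 by (simp add: monom_mult)
  define w where "w = smultF (monom4 u1) y1 - smultF (monom4 u2) y2"
  have wP: "w \<in> P 1" unfolding w_def using Pproj y1 y2 by (simp add: proj_diff proj_smult)
  have "d 1 w = smultF (monom4 u1) (d 1 y1) - smultF (monom4 u2) (d 1 y2)"
    unfolding w_def by (simp only: S_linear_diff[OF d1] S_linear_smult[OF d1])
  also have "\<dots> = smultF (monom4 Lx) p - smultF (monom4 Lx) p"
    by (simp only: y1(2) y2(2) smultF_smultF m1 m2)
  finally have "d 1 w = 0" by simp
  then have "w \<in> d 2 ` P 2" using ex1 wP by blast
  then have "w = 0" using P2 S_linear_0[OF d2] by simp
  then have yeq: "smultF (monom4 u1) y1 = smultF (monom4 u2) y2" unfolding w_def by simp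
  have cw: "monom4 u1 * lk y1 n = monom4 u2 * lk y2 n" for n
    using arg_cong[OF yeq, of "\<lambda>v. lk v n"] by simp
  define z where "z = Abs_poly_mapping (\<lambda>n. shiftp u2 (lk y1 n))"
  have lkz: "lk z n = shiftp u2 (lk y1 n)" for n
    unfolding z_def by (subst lk_Absk[of y1]) auto
  have y1z: "y1 = smultF (monom4 u2) z"
  proof (rule poly_mapping_eqI)
    fix n
    show "lk y1 n = lk (smultF (monom4 u2) z) n"
      using monom_shiftp[of "lk y1 n" u2] disj_divide[OF cw[of n] disj] by (simp add: lkz)
  qed
  obtain e where e: "S_linear e" "\<And>v. e (e v) = e v" "P 1 = range e"
    using Pproj[of 1] unfolding projective_sub_def by blast
  have "e y1 = y1" using y1(1) e by auto
  then have "smultF (monom4 u2) (e z) = smultF (monom4 u2) z"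
    using y1z S_linear_smult[OF e(1)] by metis
  then have "e z = z" by (rule smultF_cancel)
  then have zP: "z \<in> P 1" using e(3) by (metis rangeI)
  have "smultF (monom4 u2) (d 1 z) = smultF (monom4 u2) (smultF (monom4 g) p)"
    using y1(2) y1z S_linear_smult[OF d1] by (simp add: smultF_smultF m3)
  then have "d 1 z = smultF (monom4 g) p" by (rule smultF_cancel)
  then have "smultF (monom4 g) p \<in> d 1 ` P 1" by (intro image_eqI[OF _ zP]) (rule sym)
  then have gM: "(monom4 g :: 'f poly4) \<in> M" by (rule inM[THEN iffD2])
  have "\<exists>i\<in>{1..q}. le4 (a i) g" using gM unfolding Mdef by (rule ideal_monom)
  then obtain i where i: "i \<in> {1..q}" "le4 (a i) g" by (rule bexE)
  have g1: "le4 g (a 1)" and g2: "le4 g (a 2)" unfolding g_def le4_def by auto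
  show False
  proof (cases "i = 1")
    case True
    then have "le4 (a 1) (a 2)" using i g2 unfolding le4_def by (meson le_trans)
    then show False using min_gens[OF minimal i1 i2] by simp
  next
    case False
    then have "le4 (a i) (a 1)" using i g1 unfolding le4_def by (meson le_trans)
    then show False using min_gens[OF minimal i(1) i1 False] by simp
  qed
qed


definition rst :: "nat set \<Rightarrow> 'k::field freeS \<Rightarrow> 'k freeS" where
  "rst A v = Abs_poly_mapping (\<lambda>n. if n \<in> A then lk v n else 0)"

lemma lk_rst: "lk (rst A v) n = (if n \<in> A then lk v n else 0)"
  unfolding rst_def by (subst lk_Absk[of v]) auto

definition supp_set :: "nat set \<Rightarrow> 'k::field freeS set" where
  "supp_set A = {v. \<forall>n. n \<notin> A \<longrightarrow> lk v n = 0}"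

lemma proj_supp: "projective_sub (supp_set A :: 'k::field freeS set)"
  unfolding projective_sub_def
proof (intro exI[of _ "rst A"] conjI allI)
  show "S_linear (rst A :: 'k freeS \<Rightarrow> _)" unfolding S_linear_def
    by (auto intro!: poly_mapping_eqI simp: lk_rst lookup_add)
  show "rst A (rst A v) = rst A v" for v :: "'k freeS"
    by (rule poly_mapping_eqI) (simp add: lk_rst)
  show "supp_set A = range (rst A :: 'k freeS \<Rightarrow> _)"
  proof
    show "(supp_set A :: 'k freeS set) \<subseteq> range (rst A)"
    proof
      fix v :: "'k freeS" assume "v \<in> supp_set A"
      have "rst A v = v"
      proof (rule poly_mapping_eqI)
        fix n show "lk (rst A v) n = lk v n"
          using \<open>v \<in> supp_set A\<close> unfolding supp_set_def by (simp add: lk_rst)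
      qed
      then show "v \<in> range (rst A)" by (metis rangeI)
    qed
    show "range (rst A) \<subseteq> (supp_set A :: 'k freeS set)" unfolding supp_set_def by (auto simp: lk_rst)
  qed
qed

definition Aset :: "nat \<Rightarrow> nat \<Rightarrow> nat \<Rightarrow> nat set" where
  "Aset q k i = (if i = 0 then {0} else if i = 1 then {1..q} else if i = 2 then {1..q} - {k} else {})"

definition d1 :: "(nat \<Rightarrow> (4 \<Rightarrow>\<^sub>0 nat)) \<Rightarrow> nat \<Rightarrow> 'k::field freeS \<Rightarrow> 'k freeS" where
  "d1 a q v = Abs_poly_mapping (\<lambda>n. if n = 0 then (\<Sum>i\<in>{1..q}. lk v i * monom4 (a i)) else 0)"

lemma lk_d1: "lk (d1 a q v) n = (if n = 0 then (\<Sum>i\<in>{1..q}. lk v i * monom4 (a i)) else 0)"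
  unfolding d1_def by (subst lk_Absv[of 0]) auto

definition d2 :: "(nat \<Rightarrow> (4 \<Rightarrow>\<^sub>0 nat)) \<Rightarrow> nat \<Rightarrow> nat \<Rightarrow> 'k::field freeS \<Rightarrow> 'k freeS" where
  "d2 a q k v = Abs_poly_mapping (\<lambda>n. if n \<in> {1..q} - {k} then lk v n * monom4 (sb (exp_lcm (a k) (a n)) (a n))
     else if n = k then - (\<Sum>i\<in>{1..q} - {k}. lk v i * monom4 (sb (exp_lcm (a k) (a i)) (a k))) else 0)"

lemma lk_d2: "lk (d2 a q k v) n = (if n \<in> {1..q} - {k} then lk v n * monom4 (sb (exp_lcm (a k) (a n)) (a n))
     else if n = k then - (\<Sum>i\<in>{1..q} - {k}. lk v i * monom4 (sb (exp_lcm (a k) (a i)) (a k))) else 0)"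
  unfolding d2_def by (subst lk_Absv[of "q + k"]) auto

lemma d1_linear: "S_linear (d1 a q :: 'k::field freeS \<Rightarrow> _)"
  unfolding S_linear_def
proof (intro conjI allI)
  fix u v :: "'k freeS"
  show "d1 a q (u + v) = d1 a q u + d1 a q v"
    by (rule poly_mapping_eqI) (simp add: lk_d1 lookup_add distrib_right sum.distrib)
next
  fix s and v :: "'k freeS"
  show "d1 a q (smultF s v) = smultF s (d1 a q v)"
    by (rule poly_mapping_eqI) (simp add: lk_d1 sum_distrib_left mult.assoc)
qed

lemma d2_linear: "S_linear (d2 a q k :: 'k::field freeS \<Rightarrow> _)"
  unfolding S_linear_def
proof (intro conjI allI)
  fix u v :: "'k freeS"
  show "d2 a q k (u + v) = d2 a q k u + d2 a q k v"
    by (rule poly_mapping_eqI) (simp add: lk_d2 lookup_add distrib_right sum.distrib)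
next
  fix s and v :: "'k freeS"
  show "d2 a q k (smultF s v) = smultF s (d2 a q k v)"
    by (rule poly_mapping_eqI) (simp add: lk_d2 sum_distrib_left mult.assoc)
qed


context
  fixes a :: "nat \<Rightarrow> (4 \<Rightarrow>\<^sub>0 nat)" and q k :: nat
  assumes kq: "k \<in> {1..q}"
    and mins: "\<And>i j. i \<in> {1..q} \<Longrightarrow> j \<in> {1..q} \<Longrightarrow> i \<noteq> j \<Longrightarrow> \<not> le4 (a i) (a j)"
    and dom: "\<And>i j. i \<in> {1..q} \<Longrightarrow> j \<in> {1..q} \<Longrightarrow> i \<noteq> j \<Longrightarrow> le4 (a k) (exp_lcm (a i) (a j))"
begin

lemma ex2: "{p \<in> supp_set ({1..q} - {k}). d2 a q k p = 0} = {0 :: 'k::field freeS}"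
proof
  show "{p \<in> supp_set ({1..q} - {k}). d2 a q k p = 0} \<subseteq> {0 :: 'k freeS}"
  proof
    fix p :: "'k freeS" assume p: "p \<in> {p \<in> supp_set ({1..q} - {k}). d2 a q k p = 0}"
    have "p = 0"
    proof (rule poly_mapping_eqI)
      fix n
      show "lk p n = lk 0 n"
      proof (cases "n \<in> {1..q} - {k}")
        case True
        have "lk (d2 a q k p) n = 0" using p by simp
        then have "lk p n * monom4 (sb (exp_lcm (a k) (a n)) (a n)) = 0"
          using True by (simp add: lk_d2)
        then have "monom4 (sb (exp_lcm (a k) (a n)) (a n)) * lk p n = 0"
          by (subst mult.commute)
        then have "lk p n = 0" by (rule monom_mult_eq0)
        then show ?thesis by simp
      next
        case False
        then show ?thesis using p unfolding supp_set_def by simp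
      qed
    qed
    then show "p \<in> {0}" by simp
  qed
  show "{0 :: 'k freeS} \<subseteq> {p \<in> supp_set ({1..q} - {k}). d2 a q k p = 0}"
    using S_linear_0[OF d2_linear] by (simp add: supp_set_def)
qed

lemma inj_gens: "inj_on (\<lambda>i. (monom4 (a i) :: 'k::field poly4)) {1..q}"
proof (rule inj_onI)
  fix i j assume ij: "i \<in> {1..q}" "j \<in> {1..q}" "(monom4 (a i) :: 'k poly4) = monom4 (a j)"
  have "lk (monom4 (a j) :: 'k poly4) (a i) = 1" using ij(3) unfolding monom4_def by (metis lookup_single_eq)
  then have "a j = a i" unfolding monom4_def by (metis lookup_single_not_eq zero_neq_one)
  then have "le4 (a i) (a j)" unfolding le4_def by simp
  then show "i = j" using mins ij(1,2) by blast
qed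

lemma ex0: "{p \<in> supp_set {0}. lk p 0 \<in> ideal_gen ((\<lambda>i. monom4 (a i)) ` {1..q})}
   = d1 a q ` (supp_set {1..q} :: 'k::field freeS set)"
proof
  show "d1 a q ` (supp_set {1..q} :: 'k freeS set) \<subseteq> {p \<in> supp_set {0}. lk p 0 \<in> ideal_gen ((\<lambda>i. monom4 (a i)) ` {1..q})}"
  proof
    fix x :: "'k freeS" assume "x \<in> d1 a q ` supp_set {1..q}"
    then obtain v :: "'k freeS" where v: "x = d1 a q v" by blast
    have "x \<in> supp_set {0}" unfolding v supp_set_def by (simp add: lk_d1)
    moreover have "lk x 0 \<in> ideal_gen ((\<lambda>i. monom4 (a i)) ` {1..q})"
    proof -
      have "lk x 0 = (\<Sum>i\<in>{1..q}. lk v i * monom4 (a i))" by (simp add: v lk_d1)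
      also have "\<dots> \<in> ideal_gen ((\<lambda>i. monom4 (a i)) ` {1..q})"
        apply (rule ideal_sum)
         apply simp
        apply (rule ideal_mult)
        apply (rule ideal_gen_in)
        apply simp
        done
      finally show ?thesis .
    qed
    ultimately show "x \<in> {p \<in> supp_set {0}. lk p 0 \<in> ideal_gen ((\<lambda>i. monom4 (a i)) ` {1..q})}" by simp
  qed
  show "{p \<in> supp_set {0}. lk p 0 \<in> ideal_gen ((\<lambda>i. monom4 (a i)) ` {1..q})} \<subseteq> d1 a q ` (supp_set {1..q} :: 'k freeS set)"
  proof
    fix p :: "'k freeS" assume p: "p \<in> {p \<in> supp_set {0}. lk p 0 \<in> ideal_gen ((\<lambda>i. monom4 (a i)) ` {1..q})}"
    then have "lk p 0 \<in> ideal_gen ((\<lambda>i. monom4 (a i)) ` {1..q})" by simp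
    then obtain F c where F: "finite F" "F \<subseteq> (\<lambda>i. monom4 (a i)) ` {1..q}" "lk p 0 = (\<Sum>g\<in>F. c g * g)"
      unfolding ideal_gen_def by blast
    define I where "I = {i \<in> {1..q}. (monom4 (a i) :: 'k poly4) \<in> F}"
    have IF: "(\<lambda>i. monom4 (a i)) ` I = F" using F(2) unfolding I_def by auto
    have injI: "inj_on (\<lambda>i. (monom4 (a i) :: 'k poly4)) I"
      by (rule inj_on_subset[OF inj_gens]) (auto simp: I_def)
    have s1: "(\<Sum>g\<in>F. c g * g) = (\<Sum>i\<in>I. c (monom4 (a i)) * monom4 (a i))"
      unfolding IF[symmetric] by (rule sum.reindex[OF injI, unfolded comp_def])
    define v :: "'k freeS" where "v = Abs_poly_mapping (\<lambda>n. if n \<in> I then c (monom4 (a n)) else 0)"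
    have lkv: "lk v n = (if n \<in> I then c (monom4 (a n)) else 0)" for n
      unfolding v_def by (subst lk_Absv[of q]) (auto simp: I_def)
    have vP: "v \<in> supp_set {1..q}" unfolding supp_set_def by (auto simp: lkv I_def)
    have fin: "finite {1..q}" by simp
    have "(\<Sum>i\<in>{1..q}. lk v i * monom4 (a i)) = (\<Sum>i\<in>{1..q}. if i \<in> I then c (monom4 (a i)) * monom4 (a i) else 0)"
      by (rule sum.cong) (auto simp: lkv)
    also have "\<dots> = (\<Sum>i\<in>{1..q} \<inter> I. c (monom4 (a i)) * monom4 (a i))"
      by (rule sum.inter_restrict[OF fin, symmetric])
    also have "{1..q} \<inter> I = I" by (auto simp: I_def)
    finally have "lk (d1 a q v) 0 = lk p 0" using F(3) s1 by (simp add: lk_d1)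
    moreover have "lk p n = 0" if "n \<noteq> 0" for n using p that unfolding supp_set_def by simp
    ultimately have "d1 a q v = p" by (intro poly_mapping_eqI) (simp add: lk_d1)
    then show "p \<in> d1 a q ` supp_set {1..q}" using vP by blast
  qed
qed

end


definition Lk :: "(nat \<Rightarrow> (4 \<Rightarrow>\<^sub>0 nat)) \<Rightarrow> nat \<Rightarrow> nat \<Rightarrow> (4 \<Rightarrow>\<^sub>0 nat)" where
  "Lk a k i = exp_lcm (a k) (a i)"

lemma ui_eq: "sb (exp_lcm (a k) (a i)) (a i) + a i = Lk a k i"
  unfolding Lk_def by (rule exp_eqI) (simp add: lookup_add)
lemma uk_eq: "sb (exp_lcm (a k) (a i)) (a k) + a k = Lk a k i"
  unfolding Lk_def by (rule exp_eqI) (simp add: lookup_add)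

lemma ex1_sup:
  fixes a :: "nat \<Rightarrow> (4 \<Rightarrow>\<^sub>0 nat)" and z :: "'k::field freeS"
  assumes kq: "k \<in> {1..q}"
  shows "d1 a q (d2 a q k z) = 0"
proof (rule poly_mapping_eqI)
  fix n
  define S' where "S' = {1..q} - {k}"
  show "lk (d1 a q (d2 a q k z)) n = lk 0 n"
  proof (cases "n = 0")
    case False then show ?thesis by (simp add: lk_d1)
  next
    case True
    have fin: "finite {1..q}" by simp
    have "(\<Sum>i\<in>{1..q}. lk (d2 a q k z) i * monom4 (a i))
        = lk (d2 a q k z) k * monom4 (a k) + (\<Sum>i\<in>S'. lk (d2 a q k z) i * monom4 (a i))"
      unfolding S'_def by (rule sum.remove[OF fin kq])
    also have "(\<Sum>i\<in>S'. lk (d2 a q k z) i * monom4 (a i)) = (\<Sum>i\<in>S'. lk z i * monom4 (Lk a k i))"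
    proof (rule sum.cong[OF refl])
      fix i assume i: "i \<in> S'"
      have "lk (d2 a q k z) i * monom4 (a i) = lk z i * (monom4 (sb (exp_lcm (a k) (a i)) (a i)) * monom4 (a i))"
        using i unfolding S'_def by (simp add: lk_d2 mult.assoc)
      also have "\<dots> = lk z i * monom4 (Lk a k i)" by (simp only: monom_mult ui_eq)
      finally show "lk (d2 a q k z) i * monom4 (a i) = lk z i * monom4 (Lk a k i)" .
    qed
    also have "lk (d2 a q k z) k * monom4 (a k) = - (\<Sum>i\<in>S'. lk z i * monom4 (Lk a k i))"
    proof -
      have "lk (d2 a q k z) k * monom4 (a k) = - ((\<Sum>i\<in>S'. lk z i * monom4 (sb (exp_lcm (a k) (a i)) (a k))) * monom4 (a k))"
        unfolding S'_def by (simp add: lk_d2)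
      also have "(\<Sum>i\<in>S'. lk z i * monom4 (sb (exp_lcm (a k) (a i)) (a k))) * monom4 (a k)
          = (\<Sum>i\<in>S'. lk z i * (monom4 (sb (exp_lcm (a k) (a i)) (a k)) * monom4 (a k)))"
        by (simp only: sum_distrib_right mult.assoc)
      also have "\<dots> = (\<Sum>i\<in>S'. lk z i * monom4 (Lk a k i))" by (simp only: monom_mult uk_eq)
      finally show ?thesis .
    qed
    finally have "(\<Sum>i\<in>{1..q}. lk (d2 a q k z) i * monom4 (a i)) = 0" by simp
    then show ?thesis using True by (simp add: lk_d1)
  qed
qed


lemma syz_coef:
  fixes a :: "nat \<Rightarrow> (4 \<Rightarrow>\<^sub>0 nat)" and v :: "'k::field freeS"
  assumes dom: "\<And>i j. i \<in> {1..q} \<Longrightarrow> j \<in> {1..q} \<Longrightarrow> i \<noteq> j \<Longrightarrow> le4 (a k) (exp_lcm (a i) (a j))"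
    and H: "(\<Sum>i\<in>{1..q}. lk v i * monom4 (a i)) = 0"
    and n: "n \<in> {1..q}" and nz: "lk (lk v n) b \<noteq> 0"
  shows "le4 (sb (exp_lcm (a k) (a n)) (a n)) b"
proof (rule ccontr)
  assume nle: "\<not> le4 (sb (exp_lcm (a k) (a n)) (a n)) b"
  define e where "e = a n + b"
  have nk: "\<not> le4 (a k) e"
  proof
    assume h: "le4 (a k) e"
    have "lk (sb (exp_lcm (a k) (a n)) (a n)) w \<le> lk b w" for w
      using h[unfolded le4_def e_def, rule_format, of w] by (simp add: lookup_add max_def, linarith)
    then have "le4 (sb (exp_lcm (a k) (a n)) (a n)) b" by (simp add: le4_def)
    then show False using nle by simp
  qed
  have fin: "finite {1..q}" by simp
  have "0 = lk (\<Sum>i\<in>{1..q}. lk v i * monom4 (a i)) e" using H by simp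
  also have "\<dots> = (\<Sum>i\<in>{1..q}. lk (monom4 (a i) * lk v i) e)"
    by (simp add: lookup_sum mult.commute)
  also have "\<dots> = lk (monom4 (a n) * lk v n) e + (\<Sum>i\<in>{1..q} - {n}. lk (monom4 (a i) * lk v i) e)"
    by (rule sum.remove[OF fin n])
  also have "(\<Sum>i\<in>{1..q} - {n}. lk (monom4 (a i) * lk v i) e) = 0"
  proof (rule sum.neutral, rule ballI)
    fix i assume i: "i \<in> {1..q} - {n}"
    have "\<not> le4 (a i) e"
    proof
      assume ai: "le4 (a i) e"
      have an: "le4 (a n) e" unfolding e_def by (rule le4_addI)
      have "le4 (a k) (exp_lcm (a i) (a n))" using dom i n by auto
      then have "le4 (a k) e" using ai an unfolding le4_def by (metis lk_lcm max.bounded_iff order_trans)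
      then show False using nk by simp
    qed
    then show "lk (monom4 (a i) * lk v i) e = 0" by (simp add: lk_monom_mult)
  qed
  also have "lk (monom4 (a n) * lk v n) e = lk (lk v n) b" unfolding e_def by (rule lk_monom_mult_add)
  finally show False using nz by simp
qed

lemma ex1_sub:
  fixes a :: "nat \<Rightarrow> (4 \<Rightarrow>\<^sub>0 nat)" and v :: "'k::field freeS"
  assumes kq: "k \<in> {1..q}"
    and dom: "\<And>i j. i \<in> {1..q} \<Longrightarrow> j \<in> {1..q} \<Longrightarrow> i \<noteq> j \<Longrightarrow> le4 (a k) (exp_lcm (a i) (a j))"
    and vP: "v \<in> supp_set {1..q}" and dv: "d1 a q v = 0"
  shows "v \<in> d2 a q k ` supp_set ({1..q} - {k})"
proof -
  define S' where "S' = {1..q} - {k}"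
  have H: "(\<Sum>i\<in>{1..q}. lk v i * monom4 (a i)) = 0"
    using arg_cong[OF dv, of "\<lambda>x. lk x 0"] by (simp add: lk_d1)
  define u where "u i = sb (exp_lcm (a k) (a i)) (a i)" for i
  define z :: "'k freeS" where "z = Abs_poly_mapping (\<lambda>n. if n \<in> S' then shiftp (u n) (lk v n) else 0)"
  have lkz: "lk z n = (if n \<in> S' then shiftp (u n) (lk v n) else 0)" for n
    unfolding z_def by (subst lk_Absv[of q]) (auto simp: S'_def)
  have zP: "z \<in> supp_set S'" unfolding supp_set_def by (simp add: lkz)
  have mz: "monom4 (u i) * lk z i = lk v i" if "i \<in> S'" for i
  proof -
    have "monom4 (u i) * shiftp (u i) (lk v i) = lk v i"
      by (rule monom_shiftp) (use syz_coef[OF dom H] that in \<open>auto simp: S'_def u_def\<close>)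
    then show ?thesis using that by (simp add: lkz)
  qed
  have fin: "finite {1..q}" by simp
  have "d2 a q k z = v"
  proof (rule poly_mapping_eqI)
    fix n
    show "lk (d2 a q k z) n = lk v n"
    proof (cases "n \<in> S'")
      case True
      have "lk (d2 a q k z) n = lk z n * monom4 (u n)"
        using True unfolding S'_def u_def by (simp add: lk_d2)
      also have "\<dots> = lk v n" using mz[OF True] by (simp add: mult.commute)
      finally show ?thesis .
    next
      case False
      show ?thesis
      proof (cases "n = k")
        case True
        have "monom4 (a k) * lk (d2 a q k z) k = monom4 (a k) * lk v k"
        proof -
          have "monom4 (a k) * lk (d2 a q k z) k
              = - (monom4 (a k) * (\<Sum>i\<in>S'. lk z i * monom4 (sb (exp_lcm (a k) (a i)) (a k))))"
            unfolding S'_def by (simp add: lk_d2)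
          also have "monom4 (a k) * (\<Sum>i\<in>S'. lk z i * monom4 (sb (exp_lcm (a k) (a i)) (a k)))
              = (\<Sum>i\<in>S'. lk z i * (monom4 (sb (exp_lcm (a k) (a i)) (a k)) * monom4 (a k)))"
            unfolding sum_distrib_left by (rule sum.cong[OF refl]) (simp only: ac_simps)
          also have "\<dots> = (\<Sum>i\<in>S'. lk z i * (monom4 (u i) * monom4 (a i)))"
            by (simp only: monom_mult uk_eq ui_eq u_def)
          also have "\<dots> = (\<Sum>i\<in>S'. lk v i * monom4 (a i))"
          proof (rule sum.cong[OF refl])
            fix i assume "i \<in> S'"
            then have "monom4 (u i) * lk z i = lk v i" by (rule mz)
            then show "lk z i * (monom4 (u i) * monom4 (a i)) = lk v i * monom4 (a i)"
              by (simp only: ac_simps)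
          qed
          also have "(\<Sum>i\<in>S'. lk v i * monom4 (a i)) = - (lk v k * monom4 (a k))"
          proof -
            have "lk v k * monom4 (a k) + (\<Sum>i\<in>S'. lk v i * monom4 (a i)) = 0"
              using H sum.remove[OF fin kq, of "\<lambda>i. lk v i * monom4 (a i)"] unfolding S'_def by simp
            then show ?thesis by (simp add: eq_neg_iff_add_eq_0 add.commute)
          qed
          finally show ?thesis by (simp add: mult.commute)
        qed
        then have "lk (d2 a q k z) k = lk v k" by (rule monom_cancel)
        then show ?thesis using True by simp
      next
        case False
        have nq: "n \<notin> {1..q}" using False \<open>n \<notin> S'\<close> unfolding S'_def by auto
        then have "lk v n = 0" using vP unfolding supp_set_def by simp
        moreover have "lk (d2 a q k z) n = 0" using False nq by (auto simp: lk_d2)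
        ultimately show ?thesis by simp
      qed
    qed
  qed
  then show ?thesis using zP unfolding S'_def by blast
qed


lemma supp_empty: "supp_set {} = {0 :: 'k::field freeS}"
proof
  show "supp_set {} \<subseteq> {0 :: 'k freeS}"
  proof
    fix v :: "'k freeS" assume "v \<in> supp_set {}"
    then have "v = 0" unfolding supp_set_def by (intro poly_mapping_eqI) simp
    then show "v \<in> {0}" by simp
  qed
  show "{0 :: 'k freeS} \<subseteq> supp_set {}" unfolding supp_set_def by simp
qed

lemma zero_linear: "S_linear (\<lambda>v. 0 :: 'k::field freeS)"
  unfolding S_linear_def by (auto intro!: poly_mapping_eqI)

lemma upper:
  fixes a :: "nat \<Rightarrow> (4 \<Rightarrow>\<^sub>0 nat)" and q k :: nat
  assumes kq: "k \<in> {1..q}"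
    and mins: "\<And>i j. i \<in> {1..q} \<Longrightarrow> j \<in> {1..q} \<Longrightarrow> i \<noteq> j \<Longrightarrow> \<not> le4 (a i) (a j)"
    and dom: "\<And>i j. i \<in> {1..q} \<Longrightarrow> j \<in> {1..q} \<Longrightarrow> i \<noteq> j \<Longrightarrow> le4 (a k) (exp_lcm (a i) (a j))"
  shows "proj_resolution (ideal_gen ((\<lambda>i. monom4 (a i)) ` {1..q}) :: 'k::field poly4 set) 2
     (\<lambda>i. supp_set (Aset q k i))
     (\<lambda>i. if i = 1 then d1 a q else if i = 2 then d2 a q k else (\<lambda>v. 0)) (\<lambda>v. lk v 0)"
  unfolding proj_resolution_def
proof (intro conjI allI impI)
  let ?P = "\<lambda>i. supp_set (Aset q k i) :: 'k freeS set"
  let ?D = "\<lambda>i. if i = 1 then d1 a q else if i = 2 then d2 a q k else (\<lambda>v. 0 :: 'k freeS)"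
  let ?M = "ideal_gen ((\<lambda>i. monom4 (a i)) ` {1..q}) :: 'k poly4 set"
  show "projective_sub (?P i)" for i by (rule proj_supp)
  show "?P i = {0}" if "2 < i" for i using that by (simp add: Aset_def supp_empty)
  show "S_linear (?D i)" if "1 \<le> i" for i
    using that by (simp add: d1_linear d2_linear zero_linear)
  show "?D i ` ?P i \<subseteq> ?P (i - 1)" if "1 \<le> i" for i
  proof (cases "i = 1")
    case True then show ?thesis by (auto simp: Aset_def supp_set_def lk_d1)
  next
    case False
    show ?thesis
    proof (cases "i = 2")
      case True then show ?thesis using kq by (auto simp: Aset_def supp_set_def lk_d2)
    next
      case False
      then show ?thesis using \<open>i \<noteq> 1\<close> by (auto simp: supp_set_def)
    qed
  qed
  show "S_linear_to_S (\<lambda>v :: 'k freeS. lk v 0)"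
    unfolding S_linear_to_S_def by (simp add: lookup_add)
  show "\<exists>p\<in>?P 0. s - lk p 0 \<in> ?M" for s
  proof (rule bexI[of _ "Poly_Mapping.single 0 s"])
    show "s - lk (Poly_Mapping.single 0 s) 0 \<in> ?M" by (simp add: ideal_0)
    show "Poly_Mapping.single 0 s \<in> ?P 0" by (simp add: Aset_def supp_set_def lookup_single)
  qed
  show "{p \<in> ?P 0. lk p 0 \<in> ?M} = ?D 1 ` ?P 1"
    using ex0[of k q a, OF kq mins dom] by (simp add: Aset_def)
  show "{p \<in> ?P i. ?D i p = 0} = ?D (Suc i) ` ?P (Suc i)" if "1 \<le> i" for i
  proof (cases "i = 1")
    case True
    have "{p \<in> supp_set {1..q}. d1 a q p = 0} = d2 a q k ` (supp_set ({1..q} - {k}) :: 'k freeS set)"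
    proof
      show "{p \<in> supp_set {1..q}. d1 a q p = 0} \<subseteq> d2 a q k ` (supp_set ({1..q} - {k}) :: 'k freeS set)"
        using ex1_sub[of k q a, OF kq dom] by blast
      show "d2 a q k ` (supp_set ({1..q} - {k}) :: 'k freeS set) \<subseteq> {p \<in> supp_set {1..q}. d1 a q p = 0}"
      proof
        fix x :: "'k freeS" assume "x \<in> d2 a q k ` supp_set ({1..q} - {k})"
        then obtain z :: "'k freeS" where x: "x = d2 a q k z" by blast
        have "x \<in> supp_set {1..q}" unfolding x supp_set_def using kq by (auto simp: lk_d2)
        moreover have "d1 a q x = 0" unfolding x by (rule ex1_sup[of k q a, OF kq])
        ultimately show "x \<in> {p \<in> supp_set {1..q}. d1 a q p = 0}" by simp
      qed
    qed
    then show ?thesis using True by (simp add: Aset_def numeral_2_eq_2)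
  next
    case False
    show ?thesis
    proof (cases "i = 2")
      case True
      have "?D (Suc i) ` ?P (Suc i) = {0}" using True by (simp add: Aset_def supp_empty)
      moreover have "{p \<in> ?P i. ?D i p = 0} = {0}" using True ex2[of k q a, OF kq mins dom] by (simp add: Aset_def)
      ultimately show ?thesis by simp
    next
      case False
      have "?D (Suc i) ` ?P (Suc i) = {0}" using \<open>i \<noteq> 1\<close> False that by (simp add: Aset_def supp_empty)
      moreover have "{p \<in> ?P i. ?D i p = 0} = {0}" using \<open>i \<noteq> 1\<close> False that by (auto simp: Aset_def supp_empty)
      ultimately show ?thesis by simp
    qed
  qed
qed

theorem theorem2:
  fixes a :: "nat \<Rightarrow> (4 \<Rightarrow>\<^sub>0 nat)" and q k :: nat and M :: "'f::field poly4 set"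
  assumes "q \<ge> 2"
    and "M = ideal_gen ((\<lambda>i. monom4 (a i)) ` {1..q})"
    and "\<forall>j\<in>{1..q}. (monom4 (a j) :: 'f poly4) \<notin> ideal_gen ((\<lambda>i. monom4 (a i)) ` ({1..q} - {j}))"
    and "1 \<le> k" and "k \<le> q"
    and "\<forall>i\<in>{1..q}. \<forall>j\<in>{1..q}. i \<noteq> j \<longrightarrow>
           (monom4 (a k) :: 'f poly4) dvd monom4 (exp_lcm (a i) (a j))"
  shows "pd_quot M = 2"
proof -
  have kq: "k \<in> {1..q}" using assms(4,5) by simp
  have mins: "\<And>i j. i \<in> {1..q} \<Longrightarrow> j \<in> {1..q} \<Longrightarrow> i \<noteq> j \<Longrightarrow> \<not> le4 (a i) (a j)"
    using min_gens[OF assms(3)] by blast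
  have dom: "\<And>i j. i \<in> {1..q} \<Longrightarrow> j \<in> {1..q} \<Longrightarrow> i \<noteq> j \<Longrightarrow> le4 (a k) (exp_lcm (a i) (a j))"
    using assms(6) monom_dvd_le4 by blast
  have ex: "\<exists>P d eps. proj_resolution M 2 P d eps"
    using upper[of k q a, OF kq mins dom, where 'k = 'f] assms(2) by blast
  show ?thesis unfolding pd_quot_def
  proof (rule Least_equality)
    show "\<exists>P d eps. proj_resolution M 2 P d eps" by (rule ex)
    show "2 \<le> n" if "\<exists>P d eps. proj_resolution M n P d eps" for n
      using that lower_bound[OF assms(1) assms(2) assms(3)] by blast
  qed
qed

end
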